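(* Let $X$ be a reflexive complex Banach space and let $A$ be a positive self-adjoint operator from $X$ to $X^\ast$. Then there exist a Hilbert space $H$ and a densely defined linear operator $J$ from $H$ to $X^\ast$ such that $A=JJ^\ast$.
   Context: $X^\ast$ denotes the conjugate dual of $X$: the space of all continuous conjugate-linear functionals on $X$; $X$ is identified with $X^{\ast\ast}$. For $v\in X^\ast$, $x\in X$ write $(v,x):=v(x)$ and $(x,v):=\overline{v(x)}$. For a densely defined operator $A$ from $X$ to $X^\ast$: $A$ is positive if $(Ax,x)\ge0$ for all $x\in\operatorname{dom}A$; its adjoint $A^\ast$ (from $X$ to $X^\ast$) has domain $\{y\in X: x\mapsto(Ax,y)\text{ continuous on }\operatorname{dom}A\}$ and is determined by $(x,A^\ast y)=(Ax,y)$; $A$ is self-adjoint if $A=A^\ast$. For a Hilbert space $H$ with inner product $[\cdot,\cdot]$ (linear in the first variable) and a densely defined operator $J$ from $H$ to $X^\ast$, the adjoint $J^\ast$ is the operator from $X$ to $H$ with $\operatorname{dom}J^\ast=\{y\in X: h\mapsto (Jh,y)\text{ is continuous on }\operatorname{dom}J\}$ and $J^\ast y\in H$ determined by $[h,J^\ast y]=(Jh,y)$ for all $h\in\operatorname{dom}J$. $JJ^\ast$ denotes the composition with domain $\{y\in\operatorname{dom}J^\ast: J^\ast y\in\operatorname{dom}J\}$. *)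

theory Defs
  imports "HOL-Analysis.Analysis"
begin

class complex_normed_vector = real_normed_vector +
  fixes scaleC :: "complex \<Rightarrow> 'a \<Rightarrow> 'a"
  assumes scaleC_add_right: "scaleC a (x + y) = scaleC a x + scaleC a y"
    and scaleC_add_left: "scaleC (a + b) x = scaleC a x + scaleC b x"
    and scaleC_scaleC: "scaleC a (scaleC b x) = scaleC (a * b) x"
    and scaleC_one: "scaleC 1 x = x"
    and scaleR_scaleC: "scaleR r x = scaleC (complex_of_real r) x"
    and norm_scaleC: "norm (scaleC a x) = cmod a * norm x"

instantiation complex :: complex_normed_vector
begin
definition scaleC_complex :: "complex \<Rightarrow> complex \<Rightarrow> complex" where
  "scaleC_complex a x = a * x"
instance
  by standard (auto simp: scaleC_complex_def algebra_simps norm_mult scaleR_conv_of_real)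
end

definition conj_linear :: "('x::complex_normed_vector \<Rightarrow> complex) \<Rightarrow> bool" where
  "conj_linear f \<longleftrightarrow> (\<forall>x y. f (x + y) = f x + f y) \<and> (\<forall>c x. f (scaleC c x) = cnj c * f x)"

text \<open>X^*: continuous conjugate-linear functionals on X; vector operations pointwise.\<close>
definition cdual :: "('x::complex_normed_vector \<Rightarrow> complex) set" where
  "cdual = {f. conj_linear f \<and> continuous_on UNIV f}"

definition dual_norm :: "('x::complex_normed_vector \<Rightarrow> complex) \<Rightarrow> real" where
  "dual_norm f = onorm f"

text \<open>Reflexivity: every continuous conjugate-linear functional Phi on X^* is of the form
  v \<mapsto> (x, v) = cnj (v x) for some x in X.\<close>
definition reflexive_space :: "'x::complex_normed_vector itself \<Rightarrow> bool" where
  "reflexive_space (_::'x itself) \<longleftrightarrow>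
    (\<forall>\<Phi> :: ('x \<Rightarrow> complex) \<Rightarrow> complex.
      ((\<forall>v\<in>cdual. \<forall>w\<in>cdual. \<Phi> (\<lambda>z. v z + w z) = \<Phi> v + \<Phi> w) \<and>
       (\<forall>v\<in>cdual. \<forall>c. \<Phi> (\<lambda>z. c * v z) = cnj c * \<Phi> v) \<and>
       (\<forall>v\<in>cdual. \<forall>e>0. \<exists>d>0. \<forall>w\<in>cdual.
          dual_norm (\<lambda>z. w z - v z) < d \<longrightarrow> cmod (\<Phi> w - \<Phi> v) < e))
      \<longrightarrow> (\<exists>x::'x. \<forall>v\<in>cdual. \<Phi> v = cnj (v x)))"

definition csubspace :: "'x::complex_normed_vector set \<Rightarrow> bool" where
  "csubspace S \<longleftrightarrow> 0 \<in> S \<and> (\<forall>x\<in>S. \<forall>y\<in>S. x + y \<in> S) \<and> (\<forall>c. \<forall>x\<in>S. scaleC c x \<in> S)"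

definition dd_operator :: "'x::complex_normed_vector set \<Rightarrow> ('x \<Rightarrow> ('x \<Rightarrow> complex)) \<Rightarrow> bool" where
  "dd_operator D A \<longleftrightarrow> csubspace D \<and> closure D = UNIV \<and> (\<forall>x\<in>D. A x \<in> cdual) \<and>
     (\<forall>x\<in>D. \<forall>y\<in>D. A (x + y) = (\<lambda>z. A x z + A y z)) \<and>
     (\<forall>c. \<forall>x\<in>D. A (scaleC c x) = (\<lambda>z. c * A x z))"

definition positive_op :: "'x::complex_normed_vector set \<Rightarrow> ('x \<Rightarrow> ('x \<Rightarrow> complex)) \<Rightarrow> bool" where
  "positive_op D A \<longleftrightarrow> (\<forall>x\<in>D. Im (A x x) = 0 \<and> Re (A x x) \<ge> 0)"

definition adj_dom :: "'x::complex_normed_vector set \<Rightarrow> ('x \<Rightarrow> ('x \<Rightarrow> complex)) \<Rightarrow> 'x set" where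
  "adj_dom D A = {y. continuous_on D (\<lambda>x. A x y)}"

text \<open>A = A^*: same domain, and A^* y = A y, i.e. (x, A y) = cnj ((A y) x) = (A x)(y).\<close>
definition self_adjoint_op :: "'x::complex_normed_vector set \<Rightarrow> ('x \<Rightarrow> ('x \<Rightarrow> complex)) \<Rightarrow> bool" where
  "self_adjoint_op D A \<longleftrightarrow> adj_dom D A = D \<and> (\<forall>x\<in>D. \<forall>y\<in>D. cnj (A y x) = A x y)"

section \<open>Hilbert spaces (carried by functions 'i => complex with pointwise operations)\<close>

definition hnorm :: "(('i \<Rightarrow> complex) \<Rightarrow> ('i \<Rightarrow> complex) \<Rightarrow> complex) \<Rightarrow> ('i \<Rightarrow> complex) \<Rightarrow> real" where
  "hnorm ip f = sqrt (Re (ip f f))"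

definition hilbert_space :: "('i \<Rightarrow> complex) set \<Rightarrow> (('i \<Rightarrow> complex) \<Rightarrow> ('i \<Rightarrow> complex) \<Rightarrow> complex) \<Rightarrow> bool" where
  "hilbert_space H ip \<longleftrightarrow>
     (\<lambda>_. 0) \<in> H \<and> (\<forall>f\<in>H. \<forall>g\<in>H. (\<lambda>t. f t + g t) \<in> H) \<and> (\<forall>c. \<forall>f\<in>H. (\<lambda>t. c * f t) \<in> H) \<and>
     (\<forall>f\<in>H. \<forall>g\<in>H. \<forall>h\<in>H. ip (\<lambda>t. f t + g t) h = ip f h + ip g h) \<and>
     (\<forall>c. \<forall>f\<in>H. \<forall>g\<in>H. ip (\<lambda>t. c * f t) g = c * ip f g) \<and>
     (\<forall>f\<in>H. \<forall>g\<in>H. ip g f = cnj (ip f g)) \<and>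
     (\<forall>f\<in>H. Re (ip f f) \<ge> 0 \<and> (ip f f = 0 \<longleftrightarrow> f = (\<lambda>_. 0))) \<and>
     (\<forall>s::nat \<Rightarrow> ('i \<Rightarrow> complex). (\<forall>n. s n \<in> H) \<and>
        (\<forall>e>0. \<exists>N. \<forall>m\<ge>N. \<forall>n\<ge>N. hnorm ip (\<lambda>t. s m t - s n t) < e)
        \<longrightarrow> (\<exists>l\<in>H. \<forall>e>0. \<exists>N. \<forall>n\<ge>N. hnorm ip (\<lambda>t. s n t - l t) < e))"

definition dd_operator_H ::
  "('i \<Rightarrow> complex) set \<Rightarrow> (('i \<Rightarrow> complex) \<Rightarrow> ('i \<Rightarrow> complex) \<Rightarrow> complex) \<Rightarrow> ('i \<Rightarrow> complex) set
   \<Rightarrow> (('i \<Rightarrow> complex) \<Rightarrow> ('x::complex_normed_vector \<Rightarrow> complex)) \<Rightarrow> bool" where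
  "dd_operator_H H ip DJ J \<longleftrightarrow>
     DJ \<subseteq> H \<and> (\<lambda>_. 0) \<in> DJ \<and> (\<forall>f\<in>DJ. \<forall>g\<in>DJ. (\<lambda>t. f t + g t) \<in> DJ) \<and>
     (\<forall>c. \<forall>f\<in>DJ. (\<lambda>t. c * f t) \<in> DJ) \<and>
     (\<forall>h\<in>H. \<forall>e>0. \<exists>g\<in>DJ. hnorm ip (\<lambda>t. h t - g t) < e) \<and>
     (\<forall>h\<in>DJ. J h \<in> cdual) \<and>
     (\<forall>f\<in>DJ. \<forall>g\<in>DJ. J (\<lambda>t. f t + g t) = (\<lambda>z. J f z + J g z)) \<and>
     (\<forall>c. \<forall>f\<in>DJ. J (\<lambda>t. c * f t) = (\<lambda>z. c * J f z))"

definition adj_dom_H ::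
  "(('i \<Rightarrow> complex) \<Rightarrow> ('i \<Rightarrow> complex) \<Rightarrow> complex) \<Rightarrow> ('i \<Rightarrow> complex) set
   \<Rightarrow> (('i \<Rightarrow> complex) \<Rightarrow> ('x::complex_normed_vector \<Rightarrow> complex)) \<Rightarrow> 'x set" where
  "adj_dom_H ip DJ J = {y. \<forall>h\<in>DJ. \<forall>e>0. \<exists>d>0. \<forall>g\<in>DJ.
       hnorm ip (\<lambda>t. g t - h t) < d \<longrightarrow> cmod (J g y - J h y) < e}"

end

theory Submission
  imports Defs
begin

lemma scaleC_zero_left[simp]: "scaleC 0 (x::'a::complex_normed_vector) = 0"
  using scaleR_scaleC[of 0 x] by simp
lemma scaleC_minus1: "scaleC (-1) (x::'a::complex_normed_vector) = - x"
  using scaleR_scaleC[of "-1" x] by simp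
lemma scaleC_zero_right[simp]: "scaleC c (0::'a::complex_normed_vector) = 0"
  using scaleC_add_right[of c 0 0] by simp
lemma scaleC_minus_right: "scaleC c (- x::'a::complex_normed_vector) = - scaleC c x"
  using scaleC_add_right[of c x "-x"] by (simp add: minus_unique)
lemma scaleC_diff_right: "scaleC c (x - y::'a::complex_normed_vector) = scaleC c x - scaleC c y"
  using scaleC_add_right[of c x "-y"] by (simp add: scaleC_minus_right)

lemma real_cs:
  fixes G a b :: real
  assumes "G \<ge> 0" "a \<ge> 0" "b \<ge> 0" "\<And>t. 0 \<le> a - 2*t*G + t^2*G*b"
  shows "G \<le> a * b"
proof (cases "G = 0")
  case True then show ?thesis using assms by simp
next
  case G: False
  show ?thesis
  proof (cases "b = 0")
    case True
    have "0 \<le> a - 2*((a+1)/(2*G))*G" using assms(4)[of "(a+1)/(2*G)"] True by simp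
    also have "\<dots> = -1" using G by (simp add: field_simps)
    finally show ?thesis by simp
  next
    case False
    have "0 \<le> a - 2*(1/b)*G + (1/b)^2*G*b" using assms(4) .
    also have "\<dots> = a - G / b" using False by (simp add: field_simps power2_eq_square)
    finally have "G / b \<le> a" by simp
    then show ?thesis using False assms(3) by (simp add: divide_le_eq mult.commute)
  qed
qed

lemma cmod_sq: "cmod z * cmod z = Re z * Re z + Im z * Im z"
  using cmod_power2[of z] by (simp add: power2_eq_square)

locale setting =
  fixes D :: "'x::complex_normed_vector set" and A :: "'x \<Rightarrow> 'x \<Rightarrow> complex"
  assumes dd: "dd_operator D A" and pos: "positive_op D A" and sa: "self_adjoint_op D A"
begin

lemma sub: "csubspace D" using dd unfolding dd_operator_def by simp
lemma D0[simp]: "0 \<in> D" using sub unfolding csubspace_def by simp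
lemma Dadd[intro]: "x \<in> D \<Longrightarrow> y \<in> D \<Longrightarrow> x + y \<in> D" using sub unfolding csubspace_def by simp
lemma Dscale[intro]: "x \<in> D \<Longrightarrow> scaleC c x \<in> D" using sub unfolding csubspace_def by simp
lemma Dminus[intro]: "x \<in> D \<Longrightarrow> - x \<in> D" using Dscale[of x "-1"] by (simp add: scaleC_minus1)
lemma Ddiff[intro]: "x \<in> D \<Longrightarrow> y \<in> D \<Longrightarrow> x - y \<in> D"
  using Dadd[of x "-y"] Dminus[of y] by simp
lemma dense: "closure D = UNIV" using dd unfolding dd_operator_def by simp
lemma Acdual: "x \<in> D \<Longrightarrow> A x \<in> cdual" using dd unfolding dd_operator_def by simp
lemma Aadd: "x \<in> D \<Longrightarrow> y \<in> D \<Longrightarrow> A (x + y) z = A x z + A y z"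
  using dd unfolding dd_operator_def by metis
lemma Ascale: "x \<in> D \<Longrightarrow> A (scaleC c x) z = c * A x z"
  using dd unfolding dd_operator_def by metis
lemma Aminus: "x \<in> D \<Longrightarrow> A (- x) z = - A x z"
  using Ascale[of x "-1" z] by (simp add: scaleC_minus1)
lemma Adiff: "x \<in> D \<Longrightarrow> y \<in> D \<Longrightarrow> A (x - y) z = A x z - A y z"
  using Aadd[of x "-y" z] Aminus[of y z] by auto
lemma Azero: "A 0 z = 0" using Ascale[of 0 0 z] by simp
lemma conjlin: "x \<in> D \<Longrightarrow> conj_linear (A x)" using Acdual unfolding cdual_def by simp
lemma Acont: "x \<in> D \<Longrightarrow> continuous_on UNIV (A x)" using Acdual unfolding cdual_def by simp
lemma Axadd: "x \<in> D \<Longrightarrow> A x (z + w) = A x z + A x w" using conjlin unfolding conj_linear_def by simp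
lemma Axscale: "x \<in> D \<Longrightarrow> A x (scaleC c z) = cnj c * A x z" using conjlin unfolding conj_linear_def by simp
lemma Axminus: "x \<in> D \<Longrightarrow> A x (- z) = - A x z"
  using Axscale[of x "-1" z] by (simp add: scaleC_minus1)
lemma Axdiff: "x \<in> D \<Longrightarrow> A x (z - w) = A x z - A x w"
  using Axadd[of x z "-w"] Axminus[of x w] by simp
lemma Axzero: "x \<in> D \<Longrightarrow> A x 0 = 0" using Axscale[of x 0 0] by simp
lemma herm: "x \<in> D \<Longrightarrow> y \<in> D \<Longrightarrow> A x y = cnj (A y x)"
  using sa unfolding self_adjoint_op_def by simp
lemma adjdom: "adj_dom D A = D" using sa unfolding self_adjoint_op_def by simp
lemma Im0: "x \<in> D \<Longrightarrow> Im (A x x) = 0" using pos unfolding positive_op_def by simp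
lemma Re0: "x \<in> D \<Longrightarrow> Re (A x x) \<ge> 0" using pos unfolding positive_op_def by simp
lemma Axx: "x \<in> D \<Longrightarrow> A x x = complex_of_real (Re (A x x))"
  using Im0 by (simp add: complex_eq_iff)

definition Q where "Q x = Re (A x x)"
definition q where "q x = sqrt (Q x)"
lemma Q0: "x \<in> D \<Longrightarrow> Q x \<ge> 0" using Re0 Q_def by simp
lemma q0: "x \<in> D \<Longrightarrow> q x \<ge> 0" unfolding q_def using Q0 by simp
lemma qsq: "x \<in> D \<Longrightarrow> (q x)^2 = Q x" using Q0 q_def by simp

lemma expand: "x \<in> D \<Longrightarrow> y \<in> D \<Longrightarrow>
   A (x + scaleC l y) (x + scaleC l y) = A x x + cnj l * A x y + l * cnj (A x y) + l * cnj l * A y y"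
  using herm[of y x] by (simp add: Aadd Ascale Axadd Axscale Dscale algebra_simps)

lemma CS: assumes "x \<in> D" "y \<in> D" shows "cmod (A x y) \<le> q x * q y"
proof -
  define G where "G = (cmod (A x y))^2"
  have "G \<le> Q x * Q y"
  proof (rule real_cs)
    fix t :: real
    let ?l = "- (complex_of_real t * A x y)"
    have "0 \<le> Re (A (x + scaleC ?l y) (x + scaleC ?l y))" by (intro Re0 Dadd Dscale assms)
    also have "\<dots> = Q x - 2*t*G + t^2*G*Q y"
      unfolding expand[OF assms] G_def Q_def
      apply (subst Axx[OF assms(1)]) apply (subst Axx[OF assms(2)])
      by (simp add: cmod_sq power2_eq_square algebra_simps)
    finally show "0 \<le> Q x - 2*t*G + t^2*G*Q y" .
  qed (use Q0 assms G_def in auto)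
  then have "sqrt G \<le> sqrt (Q x * Q y)" by simp
  then show ?thesis unfolding G_def q_def by (simp add: real_sqrt_mult)
qed


lemma Qadd: "x \<in> D \<Longrightarrow> y \<in> D \<Longrightarrow> Q (x + y) = Q x + 2 * Re (A x y) + Q y"
  unfolding Q_def using herm[of y x] by (simp add: Aadd Axadd)
lemma Qscale_gen: "x \<in> D \<Longrightarrow> z \<in> D \<Longrightarrow>
   Q (x + scaleC l z) = Q x + 2 * Re (cnj l * A x z) + (cmod l)^2 * Q z"
  unfolding Q_def expand
  apply (subst (2) Axx, assumption)
  by (simp add: cmod_sq power2_eq_square algebra_simps)
lemma Qscale: "x \<in> D \<Longrightarrow> Q (scaleC c x) = (cmod c)^2 * Q x"
  unfolding Q_def by (simp add: Ascale Axscale cmod_sq power2_eq_square algebra_simps)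
lemma qscale: "x \<in> D \<Longrightarrow> q (scaleC c x) = cmod c * q x"
  unfolding q_def by (simp add: Qscale real_sqrt_mult)
lemma qminus: "x \<in> D \<Longrightarrow> q (- x) = q x"
  using qscale[of x "-1"] by (simp add: scaleC_minus1)
lemma qsym: "x \<in> D \<Longrightarrow> y \<in> D \<Longrightarrow> q (x - y) = q (y - x)"
  using qminus[of "y - x"] by auto
lemma qadd: assumes "x \<in> D" "y \<in> D" shows "q (x + y) \<le> q x + q y"
proof -
  have "Re (A x y) \<le> q x * q y" using CS[OF assms] complex_Re_le_cmod[of "A x y"] by linarith
  then have "Q (x + y) \<le> (q x + q y)^2"
    using Qadd[OF assms] qsq[OF assms(1)] qsq[OF assms(2)] by (simp add: power2_eq_square algebra_simps)
  then have "sqrt (Q (x + y)) \<le> sqrt ((q x + q y)^2)" by (rule real_sqrt_le_mono)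
  moreover have "0 \<le> q x + q y" using q0[OF assms(1)] q0[OF assms(2)] by simp
  ultimately show ?thesis unfolding q_def[of "x+y"] by simp
qed
lemma qdiff_tri: assumes "x \<in> D" "y \<in> D" "z \<in> D" shows "q (x - z) \<le> q (x - y) + q (y - z)"
  using qadd[of "x - y" "y - z"] assms by auto
lemma para: assumes "x \<in> D" "y \<in> D" shows "Q (x + y) + Q (x - y) = 2 * Q x + 2 * Q y"
  using Qadd[of x y] Qadd[of x "-y"] assms Dminus[of y] by (auto simp: Axminus qminus Q_def Aminus)

definition qc :: "(nat \<Rightarrow> 'x) \<Rightarrow> bool" where "qc s \<longleftrightarrow> (\<forall>n. s n \<in> D) \<and> (\<forall>e>0. \<exists>N. \<forall>m\<ge>N. \<forall>n\<ge>N. q (s m - s n) < e)"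
definition F :: "(nat \<Rightarrow> 'x) \<Rightarrow> 'x \<Rightarrow> complex" where "F s = (\<lambda>z. if z \<in> D then lim (\<lambda>n. A (s n) z) else 0)"
definition E where "E x = (\<lambda>z. if z \<in> D then A x z else 0)"
definition IP :: "(nat \<Rightarrow> 'x) \<Rightarrow> (nat \<Rightarrow> 'x) \<Rightarrow> complex" where "IP s t = lim (\<lambda>n. A (s n) (t n))"

lemma qcD: "qc s \<Longrightarrow> s n \<in> D" unfolding qc_def by simp
lemma qcE: "qc s \<Longrightarrow> e > 0 \<Longrightarrow> \<exists>N. \<forall>m\<ge>N. \<forall>n\<ge>N. q (s m - s n) < e" unfolding qc_def by simp

lemma qc_bounded: assumes "qc s" shows "\<exists>B>0. \<forall>n. q (s n) \<le> B"
proof -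
  obtain N where N: "\<forall>m\<ge>N. \<forall>n\<ge>N. q (s m - s n) < 1" using qcE[OF assms, of 1] by auto
  define B where "B = (\<Sum>n\<le>N. q (s n)) + 1"
  have sum0: "(\<Sum>n\<le>N. q (s n)) \<ge> 0" by (intro sum_nonneg q0 qcD[OF assms])
  have "q (s n) \<le> B" for n
  proof (cases "n \<le> N")
    case True
    then have "q (s n) \<le> (\<Sum>n\<le>N. q (s n))"
      by (intro member_le_sum[of n "{..N}" "\<lambda>n. q (s n)"]) (simp_all add: q0 qcD[OF assms])
    then show ?thesis unfolding B_def by simp
  next
    case False
    have "q (s n) = q (s N + (s n - s N))" by simp
    also have "\<dots> \<le> q (s N) + q (s n - s N)" by (intro qadd) (auto intro: qcD[OF assms])
    also have "\<dots> \<le> (\<Sum>n\<le>N. q (s n)) + 1"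
      using N False by (intro add_mono member_le_sum) (auto intro: q0 qcD[OF assms] less_imp_le)
    finally show ?thesis unfolding B_def .
  qed
  moreover have "B > 0" using sum0 B_def by simp
  ultimately show ?thesis by auto
qed

lemma conv1: assumes "qc s" "z \<in> D" shows "(\<lambda>n. A (s n) z) \<longlonglongrightarrow> F s z"
proof -
  have "Cauchy (\<lambda>n. A (s n) z)"
  proof (rule metric_CauchyI)
    fix e :: real assume e: "e > 0"
    have qz: "q z \<ge> 0" using q0 assms by simp
    obtain N where N: "\<forall>m\<ge>N. \<forall>n\<ge>N. q (s m - s n) < e / (q z + 1)"
      using qcE[OF assms(1), of "e / (q z + 1)"] e qz by auto
    have "dist (A (s m) z) (A (s n) z) < e" if "m \<ge> N" "n \<ge> N" for m n
    proof -
      have "dist (A (s m) z) (A (s n) z) = cmod (A (s m - s n) z)"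
        by (simp add: dist_norm Adiff qcD[OF assms(1)])
      also have "\<dots> \<le> q (s m - s n) * q z" by (intro CS) (auto intro: qcD[OF assms(1)] assms)
      also have "\<dots> \<le> e / (q z + 1) * q z"
        using N that qz by (intro mult_right_mono) (auto intro: less_imp_le)
      also have "\<dots> < e" using e qz by (simp add: field_simps)
      finally show ?thesis .
    qed
    then show "\<exists>M. \<forall>m\<ge>M. \<forall>n\<ge>M. dist (A (s m) z) (A (s n) z) < e" by blast
  qed
  then show ?thesis unfolding F_def using assms(2)
    by (simp add: Cauchy_convergent_iff convergent_LIMSEQ_iff)
qed

lemma conv2: assumes "qc s" "qc t" shows "(\<lambda>n. A (s n) (t n)) \<longlonglongrightarrow> IP s t"
proof -
  obtain B1 where B1: "B1 > 0" "\<forall>n. q (s n) \<le> B1" using qc_bounded[OF assms(1)] by auto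
  obtain B2 where B2: "B2 > 0" "\<forall>n. q (t n) \<le> B2" using qc_bounded[OF assms(2)] by auto
  define B where "B = B1 + B2"
  have B: "B > 0" "\<And>n. q (s n) \<le> B" "\<And>n. q (t n) \<le> B" using B1 B2 q0 qcD assms
    unfolding B_def by (auto intro: order_trans add_increasing add_increasing2)
  have "Cauchy (\<lambda>n. A (s n) (t n))"
  proof (rule metric_CauchyI)
    fix e :: real assume e: "e > 0"
    obtain N1 where N1: "\<forall>m\<ge>N1. \<forall>n\<ge>N1. q (s m - s n) < e / (4 * B)"
      using qcE[OF assms(1), of "e / (4*B)"] e B by auto
    obtain N2 where N2: "\<forall>m\<ge>N2. \<forall>n\<ge>N2. q (t m - t n) < e / (4 * B)"
      using qcE[OF assms(2), of "e / (4*B)"] e B by auto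
    have "dist (A (s m) (t m)) (A (s n) (t n)) < e" if "m \<ge> max N1 N2" "n \<ge> max N1 N2" for m n
    proof -
      have D: "s m \<in> D" "s n \<in> D" "t m \<in> D" "t n \<in> D" using qcD assms by auto
      have "A (s m) (t m) - A (s n) (t n) = A (s m - s n) (t m) + A (s n) (t m - t n)"
        using D by (simp add: Adiff Axdiff)
      then have "dist (A (s m) (t m)) (A (s n) (t n)) \<le> cmod (A (s m - s n) (t m)) + cmod (A (s n) (t m - t n))"
        by (simp add: dist_norm norm_triangle_ineq)
      also have "\<dots> \<le> q (s m - s n) * q (t m) + q (s n) * q (t m - t n)"
        using D by (intro add_mono CS) auto
      also have "\<dots> \<le> e / (4 * B) * B + B * (e / (4 * B))"
        using N1 N2 that D B e q0[of "s m - s n"] q0[of "t m - t n"] q0[of "t m"] q0[of "s n"]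
        by (intro add_mono mult_mono) (auto intro: less_imp_le)
      also have "\<dots> = e / 2" using B by (simp add: field_simps)
      finally show ?thesis using e by simp
    qed
    then show "\<exists>M. \<forall>m\<ge>M. \<forall>n\<ge>M. dist (A (s m) (t m)) (A (s n) (t n)) < e" by blast
  qed
  then show ?thesis unfolding IP_def
    by (simp add: Cauchy_convergent_iff convergent_LIMSEQ_iff)
qed


lemma K: assumes "qc s" "qc t" shows "(\<lambda>n. F s (t n) - A (s n) (t n)) \<longlonglongrightarrow> 0"
proof (rule LIMSEQ_I)
  fix r :: real assume r: "r > 0"
  obtain B where B: "B > 0" "\<forall>n. q (t n) \<le> B" using qc_bounded[OF assms(2)] by auto
  obtain N where N: "\<forall>m\<ge>N. \<forall>n\<ge>N. q (s m - s n) < r / (2 * B)"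
    using qcE[OF assms(1), of "r / (2*B)"] r B by auto
  have "norm (F s (t n) - A (s n) (t n) - 0) < r" if n: "n \<ge> N" for n
  proof -
    have lim: "(\<lambda>m. A (s m) (t n) - A (s n) (t n)) \<longlonglongrightarrow> F s (t n) - A (s n) (t n)"
      by (intro tendsto_diff conv1 assms qcD tendsto_const)
    have "\<forall>m\<ge>N. norm (A (s m) (t n) - A (s n) (t n)) \<le> r / 2"
    proof (intro allI impI)
      fix m assume m: "m \<ge> N"
      have Ds: "s m \<in> D" "s n \<in> D" "t n \<in> D" using qcD assms by auto
      have "norm (A (s m) (t n) - A (s n) (t n)) = cmod (A (s m - s n) (t n))"
        using Ds by (simp add: Adiff)
      also have "\<dots> \<le> q (s m - s n) * q (t n)" using Ds by (intro CS) auto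
      also have "\<dots> \<le> r / (2 * B) * B"
        using N m n Ds B r q0[of "s m - s n"] q0[of "t n"] by (intro mult_mono) (auto intro: less_imp_le)
      also have "\<dots> = r / 2" using B by simp
      finally show "norm (A (s m) (t n) - A (s n) (t n)) \<le> r / 2" .
    qed
    then have "norm (F s (t n) - A (s n) (t n)) \<le> r / 2"
      by (intro LIMSEQ_le_const2[OF tendsto_norm[OF lim]]) blast
    then show ?thesis using r by simp
  qed
  then show "\<exists>no. \<forall>n\<ge>no. norm (F s (t n) - A (s n) (t n) - 0) < r" by blast
qed

lemma indep1: assumes "qc s" "qc s'" "F s = F s'" "qc t" shows "IP s t = IP s' t"
proof -
  have "(\<lambda>n. (F s (t n) - A (s' n) (t n)) - (F s (t n) - A (s n) (t n))) \<longlonglongrightarrow> 0 - 0"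
    using K[OF assms(1,4)] K[OF assms(2,4)] assms(3) by (intro tendsto_diff) auto
  then have "(\<lambda>n. A (s n) (t n) - A (s' n) (t n)) \<longlonglongrightarrow> 0" by simp
  moreover have "(\<lambda>n. A (s n) (t n) - A (s' n) (t n)) \<longlonglongrightarrow> IP s t - IP s' t"
    by (intro tendsto_diff conv2 assms)
  ultimately show ?thesis using LIMSEQ_unique by fastforce
qed

lemma IP_herm: assumes "qc s" "qc t" shows "IP t s = cnj (IP s t)"
proof -
  have "(\<lambda>n. A (t n) (s n)) \<longlonglongrightarrow> cnj (IP s t)"
    using tendsto_cnj[OF conv2[OF assms]] herm[OF qcD[OF assms(2)] qcD[OF assms(1)]] by simp
  then show ?thesis using conv2[OF assms(2,1)] LIMSEQ_unique by blast
qed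

lemma indep: assumes "qc s" "qc s'" "F s = F s'" "qc t" "qc t'" "F t = F t'"
  shows "IP s t = IP s' t'"
proof -
  have "IP s t = IP s' t" by (rule indep1) (use assms in auto)
  also have "\<dots> = cnj (IP t s')" using IP_herm[OF assms(4,2)] by simp
  also have "IP t s' = IP t' s'" by (rule indep1) (use assms in auto)
  also have "cnj \<dots> = IP s' t'" using IP_herm[OF assms(2,5)] by simp
  finally show ?thesis .
qed

definition H where "H = {F s | s. qc s}"
definition rep where "rep \<phi> = (SOME s. qc s \<and> F s = \<phi>)"
definition ip where "ip \<phi> \<psi> = IP (rep \<phi>) (rep \<psi>)"

lemma rep: assumes "qc s" shows "qc (rep (F s))" "F (rep (F s)) = F s"
proof -
  have "qc (rep (F s)) \<and> F (rep (F s)) = F s"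
    unfolding rep_def by (rule someI[of _ s]) (use assms in simp)
  then show "qc (rep (F s))" "F (rep (F s)) = F s" by auto
qed

lemma ipF: assumes "qc s" "qc t" shows "ip (F s) (F t) = IP s t"
  unfolding ip_def by (rule indep) (use rep assms in auto)

lemma HE: "\<phi> \<in> H \<Longrightarrow> (\<And>s. qc s \<Longrightarrow> \<phi> = F s \<Longrightarrow> P) \<Longrightarrow> P"
  unfolding H_def by auto


lemma Q_zero: "Q 0 = 0" unfolding Q_def by (simp add: Azero)
lemma q_zero: "q 0 = 0" unfolding q_def by (simp add: Q_zero)

lemma limc: "lim (\<lambda>n::nat. c) = (c::'b::t2_space)"
  by (rule limI) (rule tendsto_const)

lemma qc_add: assumes "qc s" "qc t" shows "qc (\<lambda>n. s n + t n)"
  unfolding qc_def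
proof (intro conjI allI impI)
  fix n show "s n + t n \<in> D" using qcD assms by auto
next
  fix e :: real assume e: "e > 0"
  obtain N1 where N1: "\<forall>m\<ge>N1. \<forall>n\<ge>N1. q (s m - s n) < e / 2" using qcE[OF assms(1), of "e/2"] e by auto
  obtain N2 where N2: "\<forall>m\<ge>N2. \<forall>n\<ge>N2. q (t m - t n) < e / 2" using qcE[OF assms(2), of "e/2"] e by auto
  have "q (s m + t m - (s n + t n)) < e" if "m \<ge> max N1 N2" "n \<ge> max N1 N2" for m n
  proof -
    have eq: "s m + t m - (s n + t n) = (s m - s n) + (t m - t n)" by (simp add: algebra_simps)
    have "q (s m + t m - (s n + t n)) \<le> q (s m - s n) + q (t m - t n)"
      unfolding eq using qcD assms by (intro qadd) auto
    also have "\<dots> < e" using N1 N2 that by fastforce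
    finally show ?thesis .
  qed
  then show "\<exists>N. \<forall>m\<ge>N. \<forall>n\<ge>N. q (s m + t m - (s n + t n)) < e" by blast
qed

lemma qc_scale: assumes "qc s" shows "qc (\<lambda>n. scaleC c (s n))"
  unfolding qc_def
proof (intro conjI allI impI)
  fix n show "scaleC c (s n) \<in> D" using qcD assms by auto
next
  fix e :: real assume e: "e > 0"
  have "cmod c + 1 > 0" by (smt (verit) norm_ge_zero)
  then have pos: "e / (cmod c + 1) > 0" using e by (intro divide_pos_pos)
  obtain N where N: "\<forall>m\<ge>N. \<forall>n\<ge>N. q (s m - s n) < e / (cmod c + 1)"
    using qcE[OF assms(1) pos] by blast
  have "q (scaleC c (s m) - scaleC c (s n)) < e" if "m \<ge> N" "n \<ge> N" for m n
  proof -
    have "q (scaleC c (s m) - scaleC c (s n)) = cmod c * q (s m - s n)"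
      using qscale qcD assms by (simp add: scaleC_diff_right[symmetric] Ddiff)
    also have "\<dots> \<le> cmod c * (e / (cmod c + 1))"
      using N that by (intro mult_left_mono) (auto intro: less_imp_le)
    also have "\<dots> < e" using e by (simp add: field_simps add_pos_nonneg)
    finally show ?thesis .
  qed
  then show "\<exists>N. \<forall>m\<ge>N. \<forall>n\<ge>N. q (scaleC c (s m) - scaleC c (s n)) < e" by blast
qed

lemma qc_const: "x \<in> D \<Longrightarrow> qc (\<lambda>n. x)"
  unfolding qc_def by (simp add: q_zero)

lemma qc_diff: assumes "qc s" "qc t" shows "qc (\<lambda>n. s n - t n)"
  using qc_add[OF assms(1) qc_scale[OF assms(2), of "-1"]] by (simp add: scaleC_minus1)

lemma F_add: assumes "qc s" "qc t" shows "F (\<lambda>n. s n + t n) = (\<lambda>z. F s z + F t z)"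
proof
  fix z show "F (\<lambda>n. s n + t n) z = F s z + F t z"
  proof (cases "z \<in> D")
    case True
    have "(\<lambda>n. A (s n + t n) z) \<longlonglongrightarrow> F s z + F t z"
      using tendsto_add[OF conv1[OF assms(1) True] conv1[OF assms(2) True]] Aadd qcD assms by simp
    then show ?thesis using conv1[OF qc_add[OF assms] True] LIMSEQ_unique by blast
  qed (simp add: F_def)
qed

lemma F_scale: assumes "qc s" shows "F (\<lambda>n. scaleC c (s n)) = (\<lambda>z. c * F s z)"
proof
  fix z show "F (\<lambda>n. scaleC c (s n)) z = c * F s z"
  proof (cases "z \<in> D")
    case True
    have "(\<lambda>n. A (scaleC c (s n)) z) \<longlonglongrightarrow> c * F s z"
      using tendsto_mult[OF tendsto_const conv1[OF assms(1) True]] Ascale qcD assms by simp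
    then show ?thesis using conv1[OF qc_scale[OF assms] True] LIMSEQ_unique by blast
  qed (simp add: F_def)
qed

lemma F_diff: assumes "qc s" "qc t" shows "F (\<lambda>n. s n - t n) = (\<lambda>z. F s z - F t z)"
  using F_add[OF assms(1) qc_scale[OF assms(2), of "-1"]] F_scale[OF assms(2), of "-1"]
  by (simp add: scaleC_minus1)

lemma F_const: "x \<in> D \<Longrightarrow> F (\<lambda>n. x) = E x"
  unfolding F_def E_def apply (rule ext) apply (simp only: limc) done

lemma IP_add: assumes "qc s" "qc t" "qc u" shows "IP (\<lambda>n. s n + t n) u = IP s u + IP t u"
proof -
  have "(\<lambda>n. A (s n + t n) (u n)) \<longlonglongrightarrow> IP s u + IP t u"
    using tendsto_add[OF conv2[OF assms(1,3)] conv2[OF assms(2,3)]] Aadd qcD assms by simp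
  then show ?thesis using conv2[OF qc_add[OF assms(1,2)] assms(3)] LIMSEQ_unique by blast
qed

lemma IP_scale: assumes "qc s" "qc u" shows "IP (\<lambda>n. scaleC c (s n)) u = c * IP s u"
proof -
  have "(\<lambda>n. A (scaleC c (s n)) (u n)) \<longlonglongrightarrow> c * IP s u"
    using tendsto_mult[OF tendsto_const conv2[OF assms(1,2)]] Ascale qcD assms by simp
  then show ?thesis using conv2[OF qc_scale[OF assms(1)] assms(2)] LIMSEQ_unique by blast
qed

lemma IP_const: "IP (\<lambda>n. x) (\<lambda>n. y) = A x y"
  unfolding IP_def by (simp add: limc)

lemma IP_nonneg: assumes "qc s" shows "Re (IP s s) \<ge> 0"
  using LIMSEQ_le_const[OF tendsto_Re[OF conv2[OF assms assms]]] Re0 qcD[OF assms] by auto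


lemma hnF: assumes "qc s" shows "(\<lambda>n. q (s n)) \<longlonglongrightarrow> hnorm ip (F s)"
  unfolding hnorm_def ipF[OF assms assms] q_def Q_def
  by (intro tendsto_real_sqrt tendsto_Re conv2 assms)

lemma EH: assumes "x \<in> D" shows "E x \<in> H"
proof -
  have "E x = F (\<lambda>n. x) \<and> qc (\<lambda>n. x)" using F_const[OF assms] qc_const[OF assms] by simp
  then show ?thesis unfolding H_def by blast
qed

lemma hnE: assumes "x \<in> D" "y \<in> D" shows "hnorm ip (\<lambda>z. E x z - E y z) = q (x - y)"
proof -
  have "(\<lambda>z. E x z - E y z) = F (\<lambda>n. x - y)"
    using F_diff[OF qc_const qc_const, of x y] F_const assms by simp
  moreover have "(\<lambda>n::nat. q (x - y)) \<longlonglongrightarrow> hnorm ip (F (\<lambda>n. x - y))"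
    using hnF[OF qc_const[of "x - y"]] assms by blast
  ultimately show ?thesis using LIMSEQ_unique[OF tendsto_const] by metis
qed

lemma approx: assumes "qc s" shows "(\<lambda>n. hnorm ip (\<lambda>z. F s z - E (s n) z)) \<longlonglongrightarrow> 0"
proof (rule LIMSEQ_I)
  fix r :: real assume r: "r > 0"
  obtain N where N: "\<forall>m\<ge>N. \<forall>n\<ge>N. q (s m - s n) < r / 2" using qcE[OF assms, of "r/2"] r by auto
  have "norm (hnorm ip (\<lambda>z. F s z - E (s n) z) - 0) < r" if n: "n \<ge> N" for n
  proof -
    have eq: "(\<lambda>z. F s z - E (s n) z) = F (\<lambda>m. s m - s n)"
      using F_diff[OF assms qc_const, of "s n"] F_const qcD assms by simp
    have qc: "qc (\<lambda>m. s m - s n)" by (intro qc_diff assms qc_const qcD)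
    have "hnorm ip (F (\<lambda>m. s m - s n)) \<le> r / 2"
      using N n by (intro LIMSEQ_le_const2[OF hnF[OF qc]]) (auto intro: less_imp_le)
    moreover have "hnorm ip (F (\<lambda>m. s m - s n)) \<ge> 0"
      using LIMSEQ_le_const[OF hnF[OF qc]] q0 qcD[OF qc] by auto
    ultimately show ?thesis using eq r by simp
  qed
  then show "\<exists>no. \<forall>n\<ge>no. norm (hnorm ip (\<lambda>z. F s z - E (s n) z) - 0) < r" by blast
qed

lemma hn_tri: assumes "f \<in> H" "g \<in> H" "h \<in> H"
  shows "hnorm ip (\<lambda>z. f z - h z) \<le> hnorm ip (\<lambda>z. f z - g z) + hnorm ip (\<lambda>z. g z - h z)"
proof -
  obtain s t u where st: "qc s" "qc t" "qc u" "f = F s" "g = F t" "h = F u"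
    using assms unfolding H_def by auto
  have 1: "(\<lambda>n. q (s n - u n)) \<longlonglongrightarrow> hnorm ip (\<lambda>z. f z - h z)"
    using hnF[OF qc_diff[OF st(1,3)]] F_diff[OF st(1,3)] st by simp
  have 2: "(\<lambda>n. q (s n - t n) + q (t n - u n)) \<longlonglongrightarrow> hnorm ip (\<lambda>z. f z - g z) + hnorm ip (\<lambda>z. g z - h z)"
    using tendsto_add[OF hnF[OF qc_diff[OF st(1,2)]] hnF[OF qc_diff[OF st(2,3)]]]
      F_diff[OF st(1,2)] F_diff[OF st(2,3)] st by simp
  show ?thesis by (rule LIMSEQ_le[OF 1 2]) (use qdiff_tri qcD st in auto)
qed

lemma hn_sym: assumes "f \<in> H" "g \<in> H"
  shows "hnorm ip (\<lambda>z. f z - g z) = hnorm ip (\<lambda>z. g z - f z)"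
proof -
  obtain s t where st: "qc s" "qc t" "f = F s" "g = F t"
    using assms unfolding H_def by auto
  have 1: "(\<lambda>n. q (s n - t n)) \<longlonglongrightarrow> hnorm ip (\<lambda>z. f z - g z)"
    using hnF[OF qc_diff[OF st(1,2)]] F_diff[OF st(1,2)] st by simp
  have 2: "(\<lambda>n. q (s n - t n)) \<longlonglongrightarrow> hnorm ip (\<lambda>z. g z - f z)"
    using hnF[OF qc_diff[OF st(2,1)]] F_diff[OF st(2,1)] st qsym qcD by simp
  show ?thesis using LIMSEQ_unique[OF 1 2] .
qed


lemma zero_F: assumes "qc s" "IP s s = 0" shows "F s = (\<lambda>_. 0)"
proof
  fix z
  have qs: "(\<lambda>n. q (s n)) \<longlonglongrightarrow> 0"
    using tendsto_real_sqrt[OF tendsto_Re[OF conv2[OF assms(1) assms(1)]]] assms(2)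
    unfolding q_def Q_def by simp
  show "F s z = 0"
  proof (cases "z \<in> D")
    case True
    have "(\<lambda>n. A (s n) z) \<longlonglongrightarrow> 0"
    proof (rule Lim_null_comparison)
      show "\<forall>\<^sub>F n in sequentially. norm (A (s n) z) \<le> q (s n) * q z"
        using CS qcD[OF assms(1)] True by (intro always_eventually) auto
      show "(\<lambda>n. q (s n) * q z) \<longlonglongrightarrow> 0" by (rule tendsto_mult_left_zero[OF qs])
    qed
    then show ?thesis using conv1[OF assms(1) True] LIMSEQ_unique by blast
  qed (simp add: F_def)
qed

lemma E0: "E 0 = (\<lambda>_. 0)" unfolding E_def  apply (rule ext) apply (simp add: Azero) done

lemma complete_H: fixes P :: "nat \<Rightarrow> 'x \<Rightarrow> complex" assumes Phi: "\<forall>n. P n \<in> H"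
  and C: "\<forall>e>0. \<exists>N. \<forall>m\<ge>N. \<forall>n\<ge>N. hnorm ip (\<lambda>t. P m t - P n t) < e"
  shows "\<exists>l\<in>H. \<forall>e>0. \<exists>N. \<forall>n\<ge>N. hnorm ip (\<lambda>t. P n t - l t) < e"
proof -
  have ex: "\<forall>k::nat. \<exists>x. x \<in> D \<and> hnorm ip (\<lambda>z. P k z - E x z) < 1 / real (Suc k)"
  proof
    fix k :: nat
    obtain s where s: "qc s" "P k = F s" using Phi unfolding H_def by auto
    obtain N where N: "\<forall>n\<ge>N. norm (hnorm ip (\<lambda>z. F s z - E (s n) z) - 0) < 1 / real (Suc k)"
      using LIMSEQ_D[OF approx[OF s(1)], of "1 / real (Suc k)"] by auto
    have "s N \<in> D \<and> hnorm ip (\<lambda>z. P k z - E (s N) z) < 1 / real (Suc k)"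
      using N[rule_format, of N] s qcD[OF s(1)] by simp
    then show "\<exists>x. x \<in> D \<and> hnorm ip (\<lambda>z. P k z - E x z) < 1 / real (Suc k)" by blast
  qed
  obtain x where x0: "\<forall>k. x k \<in> D \<and> hnorm ip (\<lambda>z. P k z - E (x k) z) < 1 / real (Suc k)"
    using choice[OF ex] by blast
  have x: "\<And>k. x k \<in> D" "\<And>k. hnorm ip (\<lambda>z. P k z - E (x k) z) < 1 / real (Suc k)"
    using x0 by auto
  have xsym: "hnorm ip (\<lambda>z. E (x k) z - P k z) < 1 / real (Suc k)" for k
  proof -
    have "hnorm ip (\<lambda>z. E (x k) z - P k z) = hnorm ip (\<lambda>z. P k z - E (x k) z)"
      by (rule hn_sym[OF EH[OF x(1)] Phi[rule_format]])
    then show ?thesis using x(2)[of k] by simp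
  qed
  have small: "\<exists>N. \<forall>k\<ge>N. 1 / real (Suc k) < e" if e: "e > 0" for e :: real
  proof -
    obtain N where N: "1 / real (Suc N) < e" using reals_Archimedean[OF e]
      by (metis inverse_eq_divide of_nat_Suc)
    have "1 / real (Suc k) < e" if "k \<ge> N" for k
    proof -
      have "1 / real (Suc k) \<le> 1 / real (Suc N)" by (rule divide_left_mono) (use that in auto)
      then show ?thesis using N by linarith
    qed
    then show ?thesis by blast
  qed
  have qcx: "qc x" unfolding qc_def
  proof (intro conjI allI impI)
    fix n show "x n \<in> D" by (rule x(1))
  next
    fix e :: real assume e: "e > 0"
    obtain N1 where N1: "\<forall>k\<ge>N1. 1 / real (Suc k) < e / 3" using small[of "e/3"] e by auto
    obtain N2 where N2: "\<forall>m\<ge>N2. \<forall>n\<ge>N2. hnorm ip (\<lambda>t. P m t - P n t) < e / 3"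
      using C e by (meson divide_pos_pos zero_less_numeral)
    have "q (x m - x n) < e" if "m \<ge> max N1 N2" "n \<ge> max N1 N2" for m n
    proof -
      have "q (x m - x n) = hnorm ip (\<lambda>z. E (x m) z - E (x n) z)" using hnE x by simp
      also have "\<dots> \<le> hnorm ip (\<lambda>z. E (x m) z - P m z) + hnorm ip (\<lambda>z. P m z - E (x n) z)"
        by (intro hn_tri EH x Phi[rule_format])
      also have "hnorm ip (\<lambda>z. P m z - E (x n) z) \<le> hnorm ip (\<lambda>z. P m z - P n z) + hnorm ip (\<lambda>z. P n z - E (x n) z)"
        by (intro hn_tri EH x Phi[rule_format])
      finally have "q (x m - x n) \<le> hnorm ip (\<lambda>z. E (x m) z - P m z) + (hnorm ip (\<lambda>z. P m z - P n z) + hnorm ip (\<lambda>z. P n z - E (x n) z))"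
        by simp
      moreover have "hnorm ip (\<lambda>z. E (x m) z - P m z) < e / 3" using xsym[of m] N1 that by force
      moreover have "hnorm ip (\<lambda>z. P n z - E (x n) z) < e / 3" using x(2)[of n] N1 that by force
      moreover have "hnorm ip (\<lambda>z. P m z - P n z) < e / 3" using N2 that by force
      ultimately show ?thesis by linarith
    qed
    then show "\<exists>N. \<forall>m\<ge>N. \<forall>n\<ge>N. q (x m - x n) < e" by blast
  qed
  have FH: "F x \<in> H" using qcx unfolding H_def by auto
  show ?thesis
  proof (intro bexI[OF _ FH] allI impI)
    fix e :: real assume e: "e > 0"
    obtain N1 where N1: "\<forall>k\<ge>N1. 1 / real (Suc k) < e / 2" using small[of "e/2"] e by auto
    obtain N2 where N2: "\<forall>n\<ge>N2. norm (hnorm ip (\<lambda>z. F x z - E (x n) z) - 0) < e / 2"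
      using LIMSEQ_D[OF approx[OF qcx], of "e/2"] e by auto
    have "hnorm ip (\<lambda>t. P n t - F x t) < e" if "n \<ge> max N1 N2" for n
    proof -
      have "hnorm ip (\<lambda>t. P n t - F x t) \<le> hnorm ip (\<lambda>z. P n z - E (x n) z) + hnorm ip (\<lambda>z. E (x n) z - F x z)"
        by (intro hn_tri EH x Phi[rule_format] FH)
      also have "hnorm ip (\<lambda>z. E (x n) z - F x z) = hnorm ip (\<lambda>z. F x z - E (x n) z)"
        by (intro hn_sym EH x FH)
      finally show ?thesis using x(2)[of n] N1 N2 that by force
    qed
    then show "\<exists>N. \<forall>n\<ge>N. hnorm ip (\<lambda>t. P n t - F x t) < e" by blast
  qed
qed

lemma hilbert: "hilbert_space H ip"
  unfolding hilbert_space_def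
proof (intro conjI ballI allI impI)
  show "(\<lambda>_. 0) \<in> H" using EH[OF D0] E0 by simp
next
  fix f g assume "f \<in> H" "g \<in> H"
  then obtain s t where st: "qc s" "qc t" "f = F s" "g = F t" unfolding H_def by auto
  have "(\<lambda>t. f t + g t) = F (\<lambda>n. s n + t n)" using F_add[OF st(1,2)] st by simp
  then show "(\<lambda>t. f t + g t) \<in> H" using qc_add[OF st(1,2)] unfolding H_def by blast
  show "ip g f = cnj (ip f g)" using ipF st IP_herm[OF st(1,2)] by simp
next
  fix c f assume "f \<in> H"
  then obtain s where st: "qc s" "f = F s" unfolding H_def by auto
  have "(\<lambda>t. c * f t) = F (\<lambda>n. scaleC c (s n))" using F_scale[OF st(1)] st by simp
  then show "(\<lambda>t. c * f t) \<in> H" using qc_scale[OF st(1)] unfolding H_def by blast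
next
  fix f g h assume "f \<in> H" "g \<in> H" "h \<in> H"
  then obtain s t u where st: "qc s" "qc t" "qc u" "f = F s" "g = F t" "h = F u" unfolding H_def by auto
  show "ip (\<lambda>t. f t + g t) h = ip f h + ip g h"
  proof -
    have "(\<lambda>t. f t + g t) = F (\<lambda>n. s n + t n)" using F_add[OF st(1,2)] st by simp
    then show ?thesis using ipF qc_add[OF st(1,2)] IP_add[OF st(1,2,3)] st by simp
  qed
next
  fix c f g assume "f \<in> H" "g \<in> H"
  then obtain s t where st: "qc s" "qc t" "f = F s" "g = F t" unfolding H_def by auto
  show "ip (\<lambda>t. c * f t) g = c * ip f g"
  proof -
    have "(\<lambda>t. c * f t) = F (\<lambda>n. scaleC c (s n))" using F_scale[OF st(1)] st by simp
    then show ?thesis using ipF qc_scale[OF st(1)] IP_scale[OF st(1,2)] st by simp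
  qed
next
  fix f assume "f \<in> H"
  then obtain s where st: "qc s" "f = F s" unfolding H_def by auto
  show "0 \<le> Re (ip f f)" using ipF[OF st(1,1)] IP_nonneg[OF st(1)] st by simp
  show "(ip f f = 0) = (f = (\<lambda>_. 0))"
  proof
    assume "ip f f = 0" then show "f = (\<lambda>_. 0)" using zero_F[OF st(1)] ipF[OF st(1,1)] st by simp
  next
    assume f0: "f = (\<lambda>_. 0)"
    have "f = F (\<lambda>n. 0)" using F_const[OF D0] E0 f0 by simp
    then show "ip f f = 0" using ipF[OF qc_const[OF D0] qc_const[OF D0]] IP_const Azero by simp
  qed
next
  fix P :: "nat \<Rightarrow> 'x \<Rightarrow> complex"
  assume "(\<forall>n. P n \<in> H) \<and> (\<forall>e>0. \<exists>N. \<forall>m\<ge>N. \<forall>n\<ge>N. hnorm ip (\<lambda>t. P m t - P n t) < e)"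
  then show "\<exists>l\<in>H. \<forall>e>0. \<exists>N. \<forall>n\<ge>N. hnorm ip (\<lambda>t. P n t - l t) < e"
    using complete_H by blast
qed


definition Jstar where "Jstar y = (\<lambda>z. if z \<in> D then cnj (A z y) else 0)"

lemma F_antilin: assumes "qc s" "z \<in> D" "w \<in> D"
  shows "F s (z - scaleC a w) = F s z - cnj a * F s w"
proof -
  have "(\<lambda>n. A (s n) (z - scaleC a w)) \<longlonglongrightarrow> F s z - cnj a * F s w"
    using tendsto_diff[OF conv1[OF assms(1,2)] tendsto_mult[OF tendsto_const conv1[OF assms(1,3)]]]
      Axdiff Axscale qcD[OF assms(1)] by simp
  moreover have "z - scaleC a w \<in> D" using assms by auto
  ultimately show ?thesis using conv1[OF assms(1)] LIMSEQ_unique by blast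
qed

lemma real_orth: fixes W Qz :: real assumes "W \<ge> 0" "Qz \<ge> 0"
  "0 \<le> - 2 * (1 / (Qz + 1)) * W + (1 / (Qz + 1))^2 * W * Qz" shows "W = 0"
proof -
  define \<tau> where "\<tau> = 1 / (Qz + 1)"
  have tau: "\<tau> > 0" "\<tau> * Qz \<le> 1" using assms(2) unfolding \<tau>_def by (auto simp: field_simps)
  have "\<tau>^2 * W * Qz = \<tau> * W * (\<tau> * Qz)" by (simp add: power2_eq_square)
  also have "\<dots> \<le> \<tau> * W" using tau assms(1) by (simp add: mult_left_le)
  finally have "0 \<le> - \<tau> * W" using assms(3) unfolding \<tau>_def[symmetric] by linarith
  then show ?thesis using tau assms(1) by (simp add: mult_le_0_iff)
qed

lemma riesz: assumes C: "\<forall>x\<in>D. cmod (A x y) \<le> C * q x"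
  shows "\<exists>t. qc t \<and> F t = Jstar y"
proof (cases "\<forall>x\<in>D. A x y = 0")
  case True
  have "F (\<lambda>n. 0) = Jstar y" using F_const[OF D0] E0 True unfolding Jstar_def by auto
  then show ?thesis using qc_const[OF D0] by blast
next
  case False
  then obtain x0 where x0: "x0 \<in> D" "A x0 y \<noteq> 0" by auto
  define S where "S = {x\<in>D. A x y = 1}"
  have AS: "A (scaleC c x) y = c * A x y" if "x \<in> D" for x c using Ascale that by simp
  have S_ne: "S \<noteq> {}"
    using x0 AS[of x0 "1 / A x0 y"] unfolding S_def by (auto intro!: exI[of _ "scaleC (1 / A x0 y) x0"])
  have Cpos: "C > 0" and Slow: "\<And>x. x \<in> S \<Longrightarrow> 1 / C^2 \<le> Q x"
  proof -
    obtain x where x: "x \<in> S" using S_ne by auto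
    then have xD: "x \<in> D" and "1 \<le> C * q x" using C unfolding S_def by force+
    show Cp: "C > 0"
    proof (rule ccontr)
      assume "\<not> C > 0"
      then have "C * q x \<le> 0" using q0[OF xD] by (intro mult_nonpos_nonneg) auto
      then show False using \<open>1 \<le> C * q x\<close> by simp
    qed
    fix x assume x: "x \<in> S"
    then have xD: "x \<in> D" unfolding S_def by auto
    have "1 \<le> C * q x" using C x unfolding S_def by force
    then have "1 / C \<le> q x" using Cp by (simp add: field_simps)
    then have "(1 / C)^2 \<le> (q x)^2" using Cp by (intro power_mono) auto
    then show "1 / C^2 \<le> Q x" using qsq[OF xD] by (simp add: power_divide)
  qed
  define m where "m = Inf (Q ` S)"
  have bdd: "bdd_below (Q ` S)" unfolding bdd_below_def using Slow by auto
  have m_low: "m \<le> Q x" if "x \<in> S" for x unfolding m_def using bdd that by (auto intro: cInf_lower)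
  have m_pos: "m \<ge> 1 / C^2" unfolding m_def using S_ne Slow by (auto intro: cInf_greatest)
  then have mpos: "m > 0" using Cpos by (smt (verit) divide_pos_pos zero_less_power)
  have "\<forall>n::nat. \<exists>x. x \<in> S \<and> Q x < m + 1 / real (Suc n)"
  proof
    fix n :: nat
    have lt: "Inf (Q ` S) < m + 1 / real (Suc n)" unfolding m_def by simp
    have ne: "Q ` S \<noteq> {}" using S_ne by simp
    obtain v where "v \<in> Q ` S" "v < m + 1 / real (Suc n)" using cInf_lessD[OF ne lt] by blast
    then show "\<exists>x. x \<in> S \<and> Q x < m + 1 / real (Suc n)" by auto
  qed
  then have "\<exists>x. \<forall>n::nat. x n \<in> S \<and> Q (x n) < m + 1 / real (Suc n)" by (rule choice)
  then obtain x where x0: "\<forall>n::nat. x n \<in> S \<and> Q (x n) < m + 1 / real (Suc n)" by blast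
  have x: "\<And>n. x n \<in> S" "\<And>n. Q (x n) < m + 1 / real (Suc n)" using x0 by auto
  have xD: "x n \<in> D" for n using x(1) unfolding S_def by auto
  have xy: "A (x n) y = 1" for n using x(1) unfolding S_def by auto
  have Qdiff: "Q (x n - x k) \<le> 2 / real (Suc n) + 2 / real (Suc k)" for n k
  proof -
    have "A (scaleC (1/2) (x n + x k)) y = 1" using AS[OF Dadd[OF xD xD]] Aadd[OF xD xD] xy by simp
    then have "scaleC (1/2) (x n + x k) \<in> S" unfolding S_def using xD by auto
    then have "m \<le> Q (scaleC (1/2) (x n + x k))" by (rule m_low)
    also have "\<dots> = Q (x n + x k) / 4" using Qscale[OF Dadd[OF xD xD], of "1/2"] by (simp add: power2_eq_square)
    finally have "4 * m \<le> Q (x n + x k)" by simp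
    moreover have "Q (x n + x k) + Q (x n - x k) = 2 * Q (x n) + 2 * Q (x k)" by (rule para[OF xD xD])
    ultimately show ?thesis using x(2)[of n] x(2)[of k] by linarith
  qed
  have qcx: "qc x" unfolding qc_def
  proof (intro conjI allI impI)
    fix n show "x n \<in> D" by (rule xD)
  next
    fix e :: real assume e: "e > 0"
    obtain N where N: "inverse (real (Suc N)) < e^2 / 4" using reals_Archimedean[of "e^2/4"] e by auto
    have "q (x a - x b) < e" if "a \<ge> N" "b \<ge> N" for a b
    proof -
      have i1: "2 / real (Suc a) \<le> 2 / real (Suc N)" using that by (intro divide_left_mono) auto
      have i2: "2 / real (Suc b) \<le> 2 / real (Suc N)" using that by (intro divide_left_mono) auto
      have N': "2 / real (Suc N) < e^2/2" using N unfolding inverse_eq_divide by simp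
      have "Q (x a - x b) < e^2" using Qdiff[of a b] i1 i2 N' by linarith
      then have "sqrt (Q (x a - x b)) < sqrt (e^2)" by (rule real_sqrt_less_mono)
      then show ?thesis unfolding q_def using e by simp
    qed
    then show "\<exists>N. \<forall>m\<ge>N. \<forall>n\<ge>N. q (x m - x n) < e" by blast
  qed
  have Qlim: "(\<lambda>n. Q (x n)) \<longlonglongrightarrow> m"
  proof (rule real_tendsto_sandwich[of "\<lambda>_. m" _ _ "\<lambda>n. m + 1 / real (Suc n)"])
    show "\<forall>\<^sub>F n in sequentially. m \<le> Q (x n)" using m_low x(1) by (intro always_eventually allI) auto
    show "\<forall>\<^sub>F n in sequentially. Q (x n) \<le> m + 1 / real (Suc n)"
      using x(2) by (intro always_eventually allI less_imp_le)
    show "(\<lambda>n. m + 1 / real (Suc n)) \<longlonglongrightarrow> m"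
      using tendsto_add[OF tendsto_const[of m] LIMSEQ_Suc[OF lim_inverse_n']] by simp
  qed simp
  have orth: "F x z = 0" if z: "z \<in> D" "A z y = 0" for z
  proof -
    define w where "w = F x z"
    have ge: "0 \<le> 2 * Re (cnj l * w) + (cmod l)^2 * Q z" for l
    proof -
      have "(\<lambda>n. Q (x n) + 2 * Re (cnj l * A (x n) z) + (cmod l)^2 * Q z) \<longlonglongrightarrow> m + 2 * Re (cnj l * w) + (cmod l)^2 * Q z"
        unfolding w_def
        by (intro tendsto_add Qlim tendsto_const tendsto_mult tendsto_Re conv1 qcx z(1))
      moreover have "m \<le> Q (x n) + 2 * Re (cnj l * A (x n) z) + (cmod l)^2 * Q z" for n
      proof -
        have "A (x n + scaleC l z) y = 1" using Aadd[OF xD Dscale[OF z(1)]] AS[OF z(1)] xy z by simp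
        then have "x n + scaleC l z \<in> S" unfolding S_def using xD z by auto
        then have "m \<le> Q (x n + scaleC l z)" by (rule m_low)
        then show ?thesis using Qscale_gen[OF xD[of n] z(1), of l] by simp
      qed
      ultimately have "m \<le> m + 2 * Re (cnj l * w) + (cmod l)^2 * Q z"
        by (intro LIMSEQ_le_const) auto
      then show ?thesis by simp
    qed
    define \<tau> where "\<tau> = 1 / (Q z + 1)"
    have tpos: "\<bar>\<tau>\<bar> = \<tau>" using Q0[OF z(1)] unfolding \<tau>_def by simp
    have "0 \<le> 2 * Re (cnj (- (complex_of_real \<tau> * w)) * w) + (cmod (- (complex_of_real \<tau> * w)))^2 * Q z"
      by (rule ge)
    also have "\<dots> = - 2 * \<tau> * (cmod w)^2 + \<tau>^2 * (cmod w)^2 * Q z"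
      using tpos by (simp add: cmod_sq norm_mult power_mult_distrib algebra_simps power2_eq_square)
    finally have "(cmod w)^2 = 0" unfolding \<tau>_def by (intro real_orth) (use Q0 z in auto)
    then show ?thesis unfolding w_def by simp
  qed
  define c where "c = F x (x 0)"
  have Fx: "F x z = cnj (A z y) * c" if z: "z \<in> D" for z
  proof -
    have "A (z - scaleC (A z y) (x 0)) y = 0" using z xD xy Adiff AS by (simp add: Dscale)
    then have "F x (z - scaleC (A z y) (x 0)) = 0" using z xD by (intro orth) auto
    then show ?thesis using F_antilin[OF qcx z xD] unfolding c_def by simp
  qed
  have cnz: "c \<noteq> 0"
  proof
    assume c0: "c = 0"
    have "(\<lambda>n. F x (x n) - A (x n) (x n)) \<longlonglongrightarrow> 0" by (rule K[OF qcx qcx])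
    then have "(\<lambda>n. - A (x n) (x n)) \<longlonglongrightarrow> 0" using Fx xD c0 by simp
    then have "(\<lambda>n. A (x n) (x n)) \<longlonglongrightarrow> 0" using tendsto_minus by force
    then have "(\<lambda>n. Q (x n)) \<longlonglongrightarrow> 0" unfolding Q_def using tendsto_Re by force
    then have "m = 0" using Qlim LIMSEQ_unique by blast
    then show False using mpos by simp
  qed
  define t where "t = (\<lambda>n. scaleC (1 / c) (x n))"
  have "F t = Jstar y"
  proof
    fix z show "F t z = Jstar y z"
      unfolding t_def F_scale[OF qcx] Jstar_def using Fx cnz by (auto simp: F_def)
  qed
  then show ?thesis using qc_scale[OF qcx] unfolding t_def by blast
qed


definition DJ where "DJ = E ` D"
definition J where "J \<phi> = A (SOME x. x \<in> D \<and> E x = \<phi>)"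

lemma E_inj: assumes "x \<in> D" "x' \<in> D" "E x = E x'" shows "A x = A x'"
proof -
  let ?f = "\<lambda>z. A x z - A x' z"
  have cont: "continuous_on UNIV ?f" using Acont assms by (intro continuous_on_diff) auto
  have cl: "closed {z \<in> UNIV. ?f z = 0}" by (rule continuous_closed_preimage_constant[OF cont closed_UNIV])
  have "D \<subseteq> {z \<in> UNIV. ?f z = 0}"
  proof
    fix z assume z: "z \<in> D"
    have "E x z = E x' z" using assms by simp
    then show "z \<in> {z \<in> UNIV. ?f z = 0}" using z unfolding E_def by simp
  qed
  then have "closure D \<subseteq> {z \<in> UNIV. ?f z = 0}" using cl by (rule closure_minimal)
  then show ?thesis using dense by auto
qed

lemma J_E: assumes "x \<in> D" shows "J (E x) = A x"
proof -
  have "\<exists>x'. x' \<in> D \<and> E x' = E x" using assms by blast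
  then have "(SOME x'. x' \<in> D \<and> E x' = E x) \<in> D \<and> E (SOME x'. x' \<in> D \<and> E x' = E x) = E x"
    by (rule someI_ex)
  then show ?thesis unfolding J_def using E_inj assms by blast
qed

lemma E_add: "x \<in> D \<Longrightarrow> y \<in> D \<Longrightarrow> (\<lambda>t. E x t + E y t) = E (x + y)"
  unfolding E_def by (rule ext) (simp add: Aadd)
lemma E_scale: "x \<in> D \<Longrightarrow> (\<lambda>t. c * E x t) = E (scaleC c x)"
  unfolding E_def by (rule ext) (simp add: Ascale)
lemma E_diff: "x \<in> D \<Longrightarrow> y \<in> D \<Longrightarrow> (\<lambda>t. E x t - E y t) = E (x - y)"
  unfolding E_def by (rule ext) (simp add: Adiff)

lemma ip_E_left: assumes "qc t" "x \<in> D" shows "ip (E x) (F t) = cnj (F t x)"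
proof -
  have "ip (E x) (F t) = IP (\<lambda>n. x) t" using ipF[OF qc_const[OF assms(2)] assms(1)] F_const[OF assms(2)] by simp
  moreover have "(\<lambda>n. A x (t n)) \<longlonglongrightarrow> cnj (F t x)"
  proof -
    have "(\<lambda>n. cnj (A (t n) x)) \<longlonglongrightarrow> cnj (F t x)" by (intro tendsto_cnj conv1 assms)
    moreover have "cnj (A (t n) x) = A x (t n)" for n using herm[OF assms(2) qcD[OF assms(1)]] by simp
    ultimately show ?thesis by simp
  qed
  ultimately show ?thesis using conv2[OF qc_const[OF assms(2)] assms(1)] LIMSEQ_unique by metis
qed

lemma bound_from: assumes d: "d > 0" and B: "\<forall>x\<in>D. q x < d \<longrightarrow> cmod (A x y) < 1"
  shows "\<forall>x\<in>D. cmod (A x y) \<le> (2 / d) * q x"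
proof (intro ballI)
  fix x assume x: "x \<in> D"
  show "cmod (A x y) \<le> (2 / d) * q x"
  proof (rule ccontr)
    assume "\<not> ?thesis"
    then have lt: "(2 / d) * q x < cmod (A x y)" by simp
    define a where "a = cmod (A x y)"
    have apos: "a > 0" using lt q0[OF x] d unfolding a_def by (smt (verit) divide_pos_pos mult_nonneg_nonneg)
    let ?x' = "scaleC (complex_of_real (1 / a)) x"
    have "cmod (A ?x' y) = 1" using Ascale[OF x] apos unfolding a_def by (simp add: norm_mult norm_divide)
    then have "\<not> q ?x' < d" using B Dscale[OF x] by force
    then have "d \<le> q x / a" using qscale[OF x] apos by (simp add: norm_divide)
    then have "a * d \<le> q x" using apos by (simp add: field_simps)
    then have "(2 / d) * (a * d) \<le> (2 / d) * q x" using d by (intro mult_left_mono) auto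
    then have "2 * a \<le> (2 / d) * q x" using d by simp
    then show False using lt apos unfolding a_def by linarith
  qed
qed

lemma main: "\<exists>(HH :: ('x \<Rightarrow> complex) set) ipp DJJ (JJ :: ('x \<Rightarrow> complex) \<Rightarrow> ('x \<Rightarrow> complex)) JJstar.
           hilbert_space HH ipp \<and> dd_operator_H HH ipp DJJ JJ \<and>
           (\<forall>y\<in>adj_dom_H ipp DJJ JJ. JJstar y \<in> HH \<and> (\<forall>h\<in>DJJ. ipp h (JJstar y) = JJ h y)) \<and>
           D = {y \<in> adj_dom_H ipp DJJ JJ. JJstar y \<in> DJJ} \<and>
           (\<forall>y\<in>D. A y = JJ (JJstar y))"
proof (intro exI conjI)
  show "hilbert_space H ip" by (rule hilbert)
  show "dd_operator_H H ip DJ J"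
    unfolding dd_operator_H_def
  proof (intro conjI ballI allI impI)
    show "DJ \<subseteq> H" unfolding DJ_def using EH by auto
    show "(\<lambda>_. 0) \<in> DJ" unfolding DJ_def using E0 D0 by (metis image_eqI)
  next
    fix f g assume "f \<in> DJ" "g \<in> DJ"
    then obtain x x' where xx: "x \<in> D" "x' \<in> D" "f = E x" "g = E x'" unfolding DJ_def by auto
    show "(\<lambda>t. f t + g t) \<in> DJ" unfolding DJ_def using E_add[OF xx(1,2)] xx by auto
    have "J (\<lambda>t. f t + g t) = A (x + x')" using E_add[OF xx(1,2)] xx J_E[OF Dadd[OF xx(1,2)]] by simp
    then show "J (\<lambda>t. f t + g t) = (\<lambda>z. J f z + J g z)"
      by (simp add: fun_eq_iff Aadd[OF xx(1,2)] J_E xx)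
  next
    fix c f assume "f \<in> DJ"
    then obtain x where xx: "x \<in> D" "f = E x" unfolding DJ_def by auto
    show "(\<lambda>t. c * f t) \<in> DJ" unfolding DJ_def using E_scale[OF xx(1)] xx by auto
    have "J (\<lambda>t. c * f t) = A (scaleC c x)" using E_scale[OF xx(1), of c] xx J_E[OF Dscale[OF xx(1)]] by simp
    then show "J (\<lambda>t. c * f t) = (\<lambda>z. c * J f z)"
      by (simp add: fun_eq_iff Ascale[OF xx(1)] J_E xx)
  next
    fix h assume "h \<in> DJ"
    then obtain x where xx: "x \<in> D" "h = E x" unfolding DJ_def by auto
    show "J h \<in> cdual" using J_E xx Acdual by simp
  next
    fix h :: "'x \<Rightarrow> complex" and e :: real assume h: "h \<in> H" and e: "e > 0"
    obtain s where s: "qc s" "h = F s" using h unfolding H_def by auto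
    obtain N where "\<forall>n\<ge>N. norm (hnorm ip (\<lambda>z. F s z - E (s n) z) - 0) < e"
      using LIMSEQ_D[OF approx[OF s(1)] e] by auto
    then have "\<bar>hnorm ip (\<lambda>t. h t - E (s N) t)\<bar> < e" using s by simp
    then have "hnorm ip (\<lambda>t. h t - E (s N) t) < e" by simp
    moreover have "E (s N) \<in> DJ" unfolding DJ_def using qcD[OF s(1)] by auto
    ultimately show "\<exists>g\<in>DJ. hnorm ip (\<lambda>t. h t - g t) < e" by blast
  qed
  have adj: "Jstar y \<in> H \<and> (\<forall>h\<in>DJ. ip h (Jstar y) = J h y)" if y: "y \<in> adj_dom_H ip DJ J" for y
  proof -
    have E0DJ: "E 0 \<in> DJ" unfolding DJ_def by auto
    obtain d where d: "d > 0" "\<forall>g\<in>DJ. hnorm ip (\<lambda>t. g t - E 0 t) < d \<longrightarrow> cmod (J g y - J (E 0) y) < 1"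
    proof -
      have "\<forall>h\<in>DJ. \<forall>e>0. \<exists>d>0. \<forall>g\<in>DJ. hnorm ip (\<lambda>t. g t - h t) < d \<longrightarrow> cmod (J g y - J h y) < e"
        using y unfolding adj_dom_H_def by simp
      from this[rule_format, OF E0DJ, of 1]
      have "\<exists>d>0. \<forall>g\<in>DJ. hnorm ip (\<lambda>t. g t - E 0 t) < d \<longrightarrow> cmod (J g y - J (E 0) y) < 1"
        by simp
      then show ?thesis using that by blast
    qed
    have "\<forall>x\<in>D. q x < d \<longrightarrow> cmod (A x y) < 1"
    proof (intro ballI impI)
      fix x assume x: "x \<in> D" "q x < d"
      have "hnorm ip (\<lambda>t. E x t - E 0 t) = q x" using hnE[OF x(1) D0] by simp
      then have "cmod (J (E x) y - J (E 0) y) < 1" using d x unfolding DJ_def by auto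
      then show "cmod (A x y) < 1" using J_E x D0 Azero by simp
    qed
    from riesz[OF bound_from[OF d(1) this]] obtain t where t: "qc t" "F t = Jstar y" by blast
    have "Jstar y \<in> H" using t unfolding H_def by (auto intro!: exI[of _ t])
    moreover have "ip h (Jstar y) = J h y" if h: "h \<in> DJ" for h
    proof -
      obtain x where xx: "x \<in> D" "h = E x" using h unfolding DJ_def by auto
      have "ip h (Jstar y) = cnj (F t x)" using ip_E_left[OF t(1) xx(1)] t xx by simp
      also have "\<dots> = A x y" using t xx unfolding Jstar_def by simp
      finally show ?thesis using J_E xx by simp
    qed
    ultimately show ?thesis by blast
  qed
  then show "\<forall>y\<in>adj_dom_H ip DJ J. Jstar y \<in> H \<and> (\<forall>h\<in>DJ. ip h (Jstar y) = J h y)" by blast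
  have JsE: "Jstar y = E y" if y: "y \<in> D" for y
  proof
    fix z show "Jstar y z = E y z" unfolding Jstar_def E_def using herm[OF y] by simp
  qed
  show "\<forall>y\<in>D. A y = J (Jstar y)" using JsE J_E by simp
  show "D = {y \<in> adj_dom_H ip DJ J. Jstar y \<in> DJ}"
  proof
    show "D \<subseteq> {y \<in> adj_dom_H ip DJ J. Jstar y \<in> DJ}"
    proof
      fix y assume y: "y \<in> D"
      have "y \<in> adj_dom_H ip DJ J" unfolding adj_dom_H_def
      proof (intro CollectI ballI allI impI)
        fix h :: "'x \<Rightarrow> complex" and e :: real assume h: "h \<in> DJ" and e: "e > 0"
        obtain x0 where x0: "x0 \<in> D" "h = E x0" using h unfolding DJ_def by auto
        have qy: "q y \<ge> 0" using q0[OF y] .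
        define d where "d = e / (q y + 1)"
        have dpos: "d > 0" unfolding d_def using e qy by simp
        have "cmod (J g y - J h y) < e" if g: "g \<in> DJ" "hnorm ip (\<lambda>t. g t - h t) < d" for g
        proof -
          obtain x where x: "x \<in> D" "g = E x" using g unfolding DJ_def by auto
          have "hnorm ip (\<lambda>t. g t - h t) = q (x - x0)" using hnE[OF x(1) x0(1)] x x0 by simp
          then have qd: "q (x - x0) < d" using g by simp
          have "cmod (J g y - J h y) = cmod (A (x - x0) y)" using J_E x x0 Adiff by simp
          also have "\<dots> \<le> q (x - x0) * q y" using x x0 y by (intro CS) auto
          also have "\<dots> \<le> d * q y" using qd qy by (intro mult_right_mono) auto
          also have "\<dots> < e" unfolding d_def using e qy by (simp add: field_simps)
          finally show ?thesis .
        qed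
        then show "\<exists>d>0. \<forall>g\<in>DJ. hnorm ip (\<lambda>t. g t - h t) < d \<longrightarrow> cmod (J g y - J h y) < e"
          using dpos by blast
      qed
      moreover have "Jstar y \<in> DJ" using JsE[OF y] y unfolding DJ_def by auto
      ultimately show "y \<in> {y \<in> adj_dom_H ip DJ J. Jstar y \<in> DJ}" by simp
    qed
  next
    show "{y \<in> adj_dom_H ip DJ J. Jstar y \<in> DJ} \<subseteq> D"
    proof
      fix y assume "y \<in> {y \<in> adj_dom_H ip DJ J. Jstar y \<in> DJ}"
      then obtain w where w: "w \<in> D" "Jstar y = E w" unfolding DJ_def by auto
      have z0: "A z (y - w) = 0" if z: "z \<in> D" for z
      proof -
        have "Jstar y z = E w z" using w by simp
        then have "cnj (A z y) = A w z" using z unfolding Jstar_def E_def by simp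
        also have "\<dots> = cnj (A z w)" using herm[OF w(1) z] .
        finally have "A z y = A z w" by simp
        then show ?thesis using Axdiff[OF z] by simp
      qed
      have "continuous_on D (\<lambda>z. A z (y - w))"
        using continuous_on_cong[of D D "\<lambda>z. A z (y - w)" "\<lambda>z. 0"] z0 continuous_on_const by auto
      then have "y - w \<in> adj_dom D A" unfolding adj_dom_def by simp
      then have "y - w \<in> D" using adjdom by simp
      then have "(y - w) + w \<in> D" using w by (intro Dadd)
      then show "y \<in> D" by simp
    qed
  qed
qed

end

theorem lemma2:
  fixes D :: "'x::{complex_normed_vector, banach} set"
    and A :: "'x \<Rightarrow> ('x \<Rightarrow> complex)"
  assumes "reflexive_space TYPE('x)"
    and "dd_operator D A"
    and "positive_op D A"
    and "self_adjoint_op D A"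
  shows "\<exists>(H :: ('x \<Rightarrow> complex) set) ip DJ (J :: ('x \<Rightarrow> complex) \<Rightarrow> ('x \<Rightarrow> complex)) Jstar.
           hilbert_space H ip \<and> dd_operator_H H ip DJ J \<and>
           (\<forall>y\<in>adj_dom_H ip DJ J. Jstar y \<in> H \<and> (\<forall>h\<in>DJ. ip h (Jstar y) = J h y)) \<and>
           D = {y \<in> adj_dom_H ip DJ J. Jstar y \<in> DJ} \<and>
           (\<forall>y\<in>D. A y = J (Jstar y))"
proof -
  interpret S: setting D A using assms(2-4) by unfold_locales
  show ?thesis by (rule S.main)
qed

end
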